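(* For positive integers $b,n$ and nonnegative integers $c$ and $k\le n$, $$\Psi_n(k,1,b,c)=\Psi_{n-1}(k,c+1,b,c).$$
   Context: All constant terms are taken with $\operatorname{CT}_x=\operatorname{CT}_{x_n}\cdots\operatorname{CT}_{x_1}$ (iterated constant-term extraction), where $(1-x_i)^{-b}$ and $x_i/(1-x_i)$ are expanded as power series in $x_i$, and for $i<j$, $(x_j-x_i)^{-c}=x_j^{-c}(1-x_i/x_j)^{-c}$ is expanded as a power series in $x_i/x_j$. $$\Psi_n(k,a,b,c):=\operatorname{CT}_x[t^k]\prod_{i=1}^n(1-x_i)^{-b}x_i^{-a+1}\Big(1+t\frac{x_i}{1-x_i}\Big)\prod_{1\le i<j\le n}(x_j-x_i)^{-c},$$ with $[t^k]$ denoting the coefficient of $t^k$; for $n=0$ the empty product is $1$, so $\Psi_0(k,a,b,c)$ is $1$ if $k=0$ and $0$ otherwise. *)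

theory Defs
  imports Main
begin

(* Psi_n(k,a,b,c) is the iterated constant term of an iterated Laurent series.
   Variables are indexed 0..n-1 (x_i here is x_{i+1} of the paper).
   A term of the full expansion is determined by:
     S    : the set of i contributing the factor t*x_i/(1-x_i)   (|S| = k, from [t^k])
     p i  : exponent taken from (1-x_i)^(-b) = sum_p binom(b+p-1,p) x_i^p
     q i  : exponent taken from x_i/(1-x_i) = sum_{q>=1} x_i^q  (q i = 0 if i notin S)
     m i j: (i<j) exponent taken from (1-x_i/x_j)^(-c) = sum_m binom(c+m-1,m) (x_i/x_j)^m
   Together with x_i^(1-a) and x_j^(-c) for each i<j, the exponent of x_i is
     1 - a + p i + q i + sum_{j>i} m i j - sum_{j<i} m j i - c*i.
   The iterated constant term is the sum of the coefficients of all terms whose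
   exponents all vanish (this set of terms is finite). *)

definition psi_configs ::
  "nat \<Rightarrow> nat \<Rightarrow> int \<Rightarrow> nat \<Rightarrow>
     (nat set \<times> (nat \<Rightarrow> nat) \<times> (nat \<Rightarrow> nat) \<times> (nat \<Rightarrow> nat \<Rightarrow> nat)) set" where
  "psi_configs n k a c =
     {(S, p, q, m).
        S \<subseteq> {..<n} \<and> card S = k \<and>
        (\<forall>i. n \<le> i \<longrightarrow> p i = 0) \<and>
        (\<forall>i. (i \<in> S \<longrightarrow> 1 \<le> q i) \<and> (i \<notin> S \<longrightarrow> q i = 0)) \<and>
        (\<forall>i j. \<not> (i < j \<and> j < n) \<longrightarrow> m i j = 0) \<and>
        (\<forall>i<n. 1 - a + int (p i) + int (q i) + (\<Sum>j\<in>{i<..<n}. int (m i j))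
                 - (\<Sum>j<i. int (m j i)) - int c * int i = 0)}"

definition Psi :: "nat \<Rightarrow> nat \<Rightarrow> int \<Rightarrow> nat \<Rightarrow> nat \<Rightarrow> int" where
  "Psi n k a b c =
     (\<Sum>(S, p, q, m) \<in> psi_configs n k a c.
        (\<Prod>i<n. int ((b + p i - 1) choose p i)) *
        (\<Prod>i<n. \<Prod>j\<in>{i<..<n}. int ((c + m i j - 1) choose m i j)))"

end

theory Submission
  imports Defs
begin

type_synonym cfg = "nat set \<times> (nat \<Rightarrow> nat) \<times> (nat \<Rightarrow> nat) \<times> (nat \<Rightarrow> nat \<Rightarrow> nat)"

definition sh :: "cfg \<Rightarrow> cfg" where
  "sh = (\<lambda>(S,p,q,m). (Suc ` S, case_nat 0 p, case_nat 0 q,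
          case_nat (\<lambda>j. 0) (\<lambda>i. case_nat 0 (m i))))"

definition un :: "cfg \<Rightarrow> cfg" where
  "un = (\<lambda>(S,p,q,m). ((\<lambda>i. i - 1) ` S, p \<circ> Suc, q \<circ> Suc, \<lambda>i j. m (Suc i) (Suc j)))"

lemma sum_gt_shift:
  "(\<Sum>j\<in>{Suc i<..<Suc n}. f j) = (\<Sum>j\<in>{i<..<n}. (f (Suc j) :: 'a::comm_monoid_add))"
  by (rule sum.reindex_bij_witness[of _ Suc "\<lambda>j. j - 1"]) auto

lemma prod_gt_shift:
  "(\<Prod>j\<in>{Suc i<..<Suc n}. f j) = (\<Prod>j\<in>{i<..<n}. (f (Suc j) :: 'a::comm_monoid_mult))"
  by (rule prod.reindex_bij_witness[of _ Suc "\<lambda>j. j - 1"]) auto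

lemma un_sh: "un (sh x) = x"
  by (cases x) (auto simp: sh_def un_def image_image o_def)

lemma sh_mem:
  assumes "x \<in> psi_configs n k (int c + 1) c"
  shows "sh x \<in> psi_configs (Suc n) k 1 c"
proof -
  obtain S p q m where x: "x = (S,p,q,m)" by (cases x) auto
  have S: "S \<subseteq> {..<n}" "card S = k" and P: "\<forall>i. n \<le> i \<longrightarrow> p i = 0"
    and Q: "\<forall>i. (i \<in> S \<longrightarrow> 1 \<le> q i) \<and> (i \<notin> S \<longrightarrow> q i = 0)"
    and M: "\<forall>i j. \<not> (i < j \<and> j < n) \<longrightarrow> m i j = 0"
    and E: "\<forall>i<n. 1 - (int c + 1) + int (p i) + int (q i) + (\<Sum>j\<in>{i<..<n}. int (m i j))
                 - (\<Sum>j<i. int (m j i)) - int c * int i = 0"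
    using assms unfolding x psi_configs_def by auto
  let ?p = "case_nat 0 p :: nat \<Rightarrow> nat" and ?q = "case_nat 0 q :: nat \<Rightarrow> nat"
    and ?m = "case_nat (\<lambda>j. 0) (\<lambda>i. case_nat 0 (m i)) :: nat \<Rightarrow> nat \<Rightarrow> nat"
  have "Suc ` S \<subseteq> {..<Suc n}" using S by auto
  moreover have "card (Suc ` S) = k" using S by (simp add: card_image)
  moreover have "\<forall>i. Suc n \<le> i \<longrightarrow> ?p i = 0" using P by (auto split: nat.split)
  moreover have "\<forall>i. (i \<in> Suc ` S \<longrightarrow> 1 \<le> ?q i) \<and> (i \<notin> Suc ` S \<longrightarrow> ?q i = 0)"
    using Q by (auto split: nat.split)
  moreover have "\<forall>i j. \<not> (i < j \<and> j < Suc n) \<longrightarrow> ?m i j = 0"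
    using M by (auto split: nat.split)
  moreover have "\<forall>i<Suc n. 1 - 1 + int (?p i) + int (?q i) + (\<Sum>j\<in>{i<..<Suc n}. int (?m i j))
                 - (\<Sum>j<i. int (?m j i)) - int c * int i = 0"
  proof (intro allI impI)
    fix i assume i: "i < Suc n"
    show "1 - 1 + int (?p i) + int (?q i) + (\<Sum>j\<in>{i<..<Suc n}. int (?m i j))
                 - (\<Sum>j<i. int (?m j i)) - int c * int i = 0"
    proof (cases i)
      case 0 then show ?thesis by simp
    next
      case (Suc i')
      have "i' < n" using i Suc by simp
      then have e: "1 - (int c + 1) + int (p i') + int (q i') + (\<Sum>j\<in>{i'<..<n}. int (m i' j))
                 - (\<Sum>j<i'. int (m j i')) - int c * int i' = 0" using E by blast
      have s1: "(\<Sum>j\<in>{i<..<Suc n}. int (?m i j)) = (\<Sum>j\<in>{i'<..<n}. int (m i' j))"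
        unfolding Suc sum_gt_shift by simp
      have s2: "(\<Sum>j<i. int (?m j i)) = (\<Sum>j<i'. int (m j i'))"
        unfolding Suc sum.lessThan_Suc_shift by simp
      show ?thesis using e unfolding s1 s2 by (simp add: Suc algebra_simps)
    qed
  qed
  ultimately show ?thesis unfolding x sh_def psi_configs_def by simp
qed

lemma un_mem:
  assumes "y \<in> psi_configs (Suc n) k 1 c"
  shows "un y \<in> psi_configs n k (int c + 1) c \<and> sh (un y) = y"
proof -
  obtain S p q m where y: "y = (S,p,q,m)" by (cases y) auto
  have S: "S \<subseteq> {..<Suc n}" "card S = k" and P: "\<forall>i. Suc n \<le> i \<longrightarrow> p i = 0"
    and Q: "\<forall>i. (i \<in> S \<longrightarrow> 1 \<le> q i) \<and> (i \<notin> S \<longrightarrow> q i = 0)"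
    and M: "\<forall>i j. \<not> (i < j \<and> j < Suc n) \<longrightarrow> m i j = 0"
    and E: "\<forall>i<Suc n. 1 - 1 + int (p i) + int (q i) + (\<Sum>j\<in>{i<..<Suc n}. int (m i j))
                 - (\<Sum>j<i. int (m j i)) - int c * int i = 0"
    using assms unfolding y psi_configs_def by auto
  have e0: "int (p 0) + int (q 0) + (\<Sum>j\<in>{0<..<Suc n}. int (m 0 j)) = 0"
    using E[rule_format, of 0] by simp
  have nn: "0 \<le> (\<Sum>j\<in>{0<..<Suc n}. int (m 0 j))" by (rule sum_nonneg) simp
  have p0: "p 0 = 0" and q0: "q 0 = 0" and ms: "(\<Sum>j\<in>{0<..<Suc n}. int (m 0 j)) = 0"
    using e0 nn by linarith+
  have m0: "m 0 j = 0" for j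
  proof (cases "0 < j \<and> j < Suc n")
    case True
    have "\<forall>j\<in>{0<..<Suc n}. int (m 0 j) = 0"
      using ms by (subst sum_nonneg_eq_0_iff[symmetric]) auto
    then show ?thesis using True by auto
  next
    case False then show ?thesis using M by auto
  qed
  have S0: "0 \<notin> S" using Q q0 by force
  have injS: "inj_on (\<lambda>i. i - 1) S" using S0 unfolding inj_on_def by (metis One_nat_def Suc_pred neq0_conv)
  have "(\<lambda>i. i - 1) ` S \<subseteq> {..<n}" proof
    fix x assume "x \<in> (\<lambda>i. i - 1) ` S"
    then obtain s where "s \<in> S" "x = s - 1" by auto
    then show "x \<in> {..<n}" using S S0 by (cases s) auto
  qed
  moreover have "card ((\<lambda>i. i - 1) ` S) = k" using S injS by (simp add: card_image)
  moreover have "\<forall>i. n \<le> i \<longrightarrow> (p \<circ> Suc) i = 0" using P by auto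
  moreover have "\<forall>i. (i \<in> (\<lambda>i. i - 1) ` S \<longrightarrow> 1 \<le> (q \<circ> Suc) i) \<and>
       (i \<notin> (\<lambda>i. i - 1) ` S \<longrightarrow> (q \<circ> Suc) i = 0)"
  proof (intro allI conjI impI)
    fix i assume "i \<in> (\<lambda>i. i - 1) ` S"
    then obtain s where "s \<in> S" "i = s - 1" by auto
    then show "1 \<le> (q \<circ> Suc) i" using S0 Q by (cases s) auto
  next
    fix i assume "i \<notin> (\<lambda>i. i - 1) ` S"
    then have "Suc i \<notin> S" by force
    then show "(q \<circ> Suc) i = 0" using Q by auto
  qed
  moreover have "\<forall>i j. \<not> (i < j \<and> j < n) \<longrightarrow> m (Suc i) (Suc j) = 0" using M by auto
  moreover have "\<forall>i<n. 1 - (int c + 1) + int ((p \<circ> Suc) i) + int ((q \<circ> Suc) i)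
       + (\<Sum>j\<in>{i<..<n}. int (m (Suc i) (Suc j)))
       - (\<Sum>j<i. int (m (Suc j) (Suc i))) - int c * int i = 0"
  proof (intro allI impI)
    fix i assume i: "i < n"
    then have e: "1 - 1 + int (p (Suc i)) + int (q (Suc i)) + (\<Sum>j\<in>{Suc i<..<Suc n}. int (m (Suc i) j))
                 - (\<Sum>j<Suc i. int (m j (Suc i))) - int c * int (Suc i) = 0" using E by blast
    show "1 - (int c + 1) + int ((p \<circ> Suc) i) + int ((q \<circ> Suc) i)
       + (\<Sum>j\<in>{i<..<n}. int (m (Suc i) (Suc j)))
       - (\<Sum>j<i. int (m (Suc j) (Suc i))) - int c * int i = 0"
      using e unfolding sum_gt_shift sum.lessThan_Suc_shift by (simp add: m0 algebra_simps)
  qed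
  ultimately have A: "un y \<in> psi_configs n k (int c + 1) c"
    unfolding y un_def psi_configs_def by simp
  have "Suc ` (\<lambda>i. i - 1) ` S = S"
  proof -
    have "Suc ` (\<lambda>i. i - 1) ` S = (\<lambda>i. Suc (i - 1)) ` S" by (simp add: image_image)
    also have "\<dots> = id ` S" using S0 by (intro image_cong) (auto, metis One_nat_def Suc_pred neq0_conv)
    finally show ?thesis by simp
  qed
  moreover have "case_nat 0 (p \<circ> Suc) = p" using p0 by (auto simp: fun_eq_iff split: nat.split)
  moreover have "case_nat 0 (q \<circ> Suc) = q" using q0 by (auto simp: fun_eq_iff split: nat.split)
  moreover have "case_nat (\<lambda>j. 0) (\<lambda>i. case_nat 0 (\<lambda>j. m (Suc i) (Suc j))) = m"
    using m0 M by (auto simp: fun_eq_iff split: nat.split)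
  ultimately have "sh (un y) = y" unfolding y un_def sh_def by (simp add: o_def)
  with A show ?thesis by simp
qed

lemma weight_sh:
  "(case sh x of (S, p, q, m) \<Rightarrow>
        (\<Prod>i<Suc n. int ((b + p i - 1) choose p i)) *
        (\<Prod>i<Suc n. \<Prod>j\<in>{i<..<Suc n}. int ((c + m i j - 1) choose m i j))) =
   (case x of (S, p, q, m) \<Rightarrow>
        (\<Prod>i<n. int ((b + p i - 1) choose p i)) *
        (\<Prod>i<n. \<Prod>j\<in>{i<..<n}. int ((c + m i j - 1) choose m i j)))"
proof -
  obtain S p q m where x: "x = (S,p,q,m)" by (cases x) auto
  show ?thesis unfolding x sh_def
    by (simp add: prod.lessThan_Suc_shift prod_gt_shift del: prod.lessThan_Suc)
qed

theorem lemma5p7: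
  fixes n k b c :: nat
  assumes "1 \<le> b" and "1 \<le> n" and "k \<le> n"
  shows "Psi n k 1 b c = Psi (n - 1) k (int c + 1) b c"
proof -
  obtain n' where n: "n = Suc n'" using assms(2) by (cases n) auto
  have bij: "bij_betw sh (psi_configs n' k (int c + 1) c) (psi_configs (Suc n') k 1 c)"
    by (rule bij_betw_byWitness[of _ un]) (auto simp: un_sh sh_mem un_mem)
  show ?thesis unfolding n Psi_def diff_Suc_1
    apply (subst sum.reindex_bij_betw[OF bij, symmetric])
    apply (rule sum.cong[OF refl])
    apply (rule weight_sh)
    done
qed

end
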